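(* Let $(\mathbf{P},d_{\mathbf{P}})$ be a finite metric poset and let $M,N$ be $\mathbf{P}$-modules. Then \[ \mathrm{dist}_{\mathrm{B}}\bigl(P^M_\bullet,P^N_\bullet\bigr)\ \le\ d_{\mathrm{GT}}(M,N). \]
   Context: Fix a field $k$; $\mathrm{vect}$ denotes the category of finite-dimensional $k$-vector spaces. A finite poset $\mathbf{P}$ is regarded as a category with a unique morphism $x\to y$ iff $x\le y$. A $\mathbf{P}$-module is a functor $\mathbf{P}\to\mathrm{vect}$; $\mathrm{vect}^{\mathbf{P}}$ is the category of $\mathbf{P}$-modules. For a monotone map $g:\mathbf{P}\to\mathbf{Q}$, $g^*:\mathrm{vect}^{\mathbf{Q}}\to\mathrm{vect}^{\mathbf{P}}$ is precomposition $N\mapsto N\circ g$. A finite metric poset is a finite poset $\mathbf{P}$ with a metric $d_{\mathbf{P}}$ on its underlying set. Galois insertions and transport. A Galois connection $f:\mathbf{Q}\rightleftarrows\mathbf{P}:g$ consists of monotone maps $f:\mathbf{Q}\to\mathbf{P}$, $g:\mathbf{P}\to\mathbf{Q}$ with $f(u)\le x\iff u\le g(x)$ for all $u\in\mathbf{Q},x\in\mathbf{P}$; it is a Galois insertion if moreover $f\circ g=\mathrm{id}_{\mathbf{P}}$. For $M,N\in\mathrm{vect}^{\mathbf{P}}$, a Galois coupling $(\mathbf{Q},f\dashv g,h\dashv i,\Gamma)$ of $(M,N)$ consists of a finite poset $\mathbf{Q}$, two Galois insertions $f:\mathbf{Q}\rightleftarrows\mathbf{P}:g$ and $h:\mathbf{Q}\rightleftarrows\mathbf{P}:i$,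 and $\Gamma\in\mathrm{vect}^{\mathbf{Q}}$ with $g^*\Gamma\cong M$ and $i^*\Gamma\cong N$. Its cost is $\mathrm{cost}(\Gamma)=\sup_{q\in\mathbf{Q}}d_{\mathbf{P}}(f(q),h(q))$. The Galois transport distance $d_{\mathrm{GT}}(M,N)$ is the infimum of the costs of all Galois couplings of $(M,N)$, and $\infty$ if there is none. Projectives and resolutions. For $x\in\mathbf{P}$, $k[\mathbf{P}]_x$ is the $\mathbf{P}$-module with $k[\mathbf{P}]_x(y)=k$ if $x\le y$ and $0$ otherwise, all structure maps between nonzero spaces being $\mathrm{id}_k$; up to isomorphism these are exactly the indecomposable projective $\mathbf{P}$-modules and every projective $\mathbf{P}$-module is a finite direct sum of them. For $x,y\in\mathbf{P}$ with $y\le x$ let $\rho(x\ge y):k[\mathbf{P}]_x\to k[\mathbf{P}]_y$ be the morphism which is $\mathrm{id}_k$ at every $z\ge x$ (it spans the one-dimensional Hom space); set $\rho(x\ge y)=0$ if $y\not\le x$. If $E=\bigoplus_{x\in\mathrm{smd}(E)}k[\mathbf{P}]_x$ and $F=\bigoplus_{y\in\mathrm{smd}(F)}k[\mathbf{P}]_y$ are projectives given with such decompositions ($\mathrm{smd}(E)$ is the finite multiset/list of indices), every morphism $\alpha:E\to F$ is uniquely a matrix $[a_{x,y}\rho(x\ge y)]$ with $a_{x,y}\in k$ and $a_{x,y}=0$ unless $x\ge y$; $\mathrm{Mat}(\alpha):=[a_{x,y}]_{(x,y)\in\mathrm{smd}(E)\times\mathrm{smd}(F)}$. A projective resolution of $M$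 is a complex $E_\bullet=(E_i,\partial^E_i:E_{i+1}\to E_i)_{i\ge0}$ of projective $\mathbf{P}$-modules with an augmentation $E_0\to M$ making $\cdots\to E_1\to E_0\to M\to0$ exact; each $E_i$ is considered with a fixed decomposition into indecomposable projectives, $|E_i|$ is the number of summands. $P^M_\bullet$ denotes a minimal projective resolution of $M$. $\mathsf{Res}(P^M_\bullet,P^N_\bullet)$ is the set of pairs $(E_\bullet,F_\bullet)$ where $E_\bullet$ is a projective resolution of $M$ and $F_\bullet$ one of $N$ with $|E_i|=|F_i|$ for all $i$. A matching of $(E_\bullet,F_\bullet)$ is a family $B=(B_i)_{i\ge0}$ of bijections $B_i:\mathrm{smd}(E_i)\to\mathrm{smd}(F_i)$ (of indexed multisets) such that for all $i\ge0$, $x\in\mathrm{smd}(E_i)$, $x'\in\mathrm{smd}(E_{i+1})$, the $(x',x)$-entry of $\mathrm{Mat}(\partial^E_i)$ equals the $(B_{i+1}(x'),B_i(x))$-entry of $\mathrm{Mat}(\partial^F_i)$. Its cost is $\mathrm{cost}(B)=\sup\{d_{\mathbf{P}}(x,B_i(x))\mid i\ge0,x\in\mathrm{smd}(E_i)\}$. $\mathrm{dist}_{\mathrm{R}}(E_\bullet,F_\bullet)$ is the infimum of costs over matchings ($\infty$ if none), and $\mathrm{dist}_{\mathrm{B}}(P^M_\bullet,P^N_\bullet):=\inf_{(E_\bullet,F_\bullet)\in\mathsf{Res}(P^M_\bullet,P^N_\bullet)}\mathrm{dist}_{\mathrm{R}}(E_\bullet,F_\bullet)$, which is $\infty$ if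 that set is empty. *)

theory Defs
  imports Complex_Main "HOL-Library.Extended_Real" "Jordan_Normal_Form.Matrix"
begin

definition finite_poset :: "'a set \<Rightarrow> ('a \<Rightarrow> 'a \<Rightarrow> bool) \<Rightarrow> bool" where
  "finite_poset X leq \<longleftrightarrow> finite X
     \<and> (\<forall>x\<in>X. leq x x)
     \<and> (\<forall>x\<in>X. \<forall>y\<in>X. leq x y \<and> leq y x \<longrightarrow> x = y)
     \<and> (\<forall>x\<in>X. \<forall>y\<in>X. \<forall>z\<in>X. leq x y \<and> leq y z \<longrightarrow> leq x z)"

definition metric_on :: "'a set \<Rightarrow> ('a \<Rightarrow> 'a \<Rightarrow> real) \<Rightarrow> bool" where
  "metric_on X d \<longleftrightarrow>
       (\<forall>x\<in>X. \<forall>y\<in>X. 0 \<le> d x y)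
     \<and> (\<forall>x\<in>X. \<forall>y\<in>X. d x y = 0 \<longleftrightarrow> x = y)
     \<and> (\<forall>x\<in>X. \<forall>y\<in>X. d x y = d y x)
     \<and> (\<forall>x\<in>X. \<forall>y\<in>X. \<forall>z\<in>X. d x z \<le> d x y + d y z)"

section \<open>Poset modules (functors to vect, via the skeleton: k^n and matrices)\<close>

record ('a, 'k) pmod =
  dimM :: "'a \<Rightarrow> nat"
  mapM :: "'a \<Rightarrow> 'a \<Rightarrow> 'k mat"

definition is_pmod :: "'a set \<Rightarrow> ('a \<Rightarrow> 'a \<Rightarrow> bool) \<Rightarrow> ('a, 'k::field) pmod \<Rightarrow> bool" where
  "is_pmod X leq M \<longleftrightarrow>
       (\<forall>x\<in>X. \<forall>y\<in>X. leq x y \<longrightarrow> mapM M x y \<in> carrier_mat (dimM M y) (dimM M x))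
     \<and> (\<forall>x\<in>X. mapM M x x = 1\<^sub>m (dimM M x))
     \<and> (\<forall>x\<in>X. \<forall>y\<in>X. \<forall>z\<in>X. leq x y \<and> leq y z \<longrightarrow> mapM M y z * mapM M x y = mapM M x z)"

definition pullback :: "('b \<Rightarrow> 'a) \<Rightarrow> ('a, 'k) pmod \<Rightarrow> ('b, 'k) pmod" where
  "pullback g N = \<lparr> dimM = (\<lambda>q. dimM N (g q)), mapM = (\<lambda>q q'. mapM N (g q) (g q')) \<rparr>"

definition pmod_iso :: "'a set \<Rightarrow> ('a \<Rightarrow> 'a \<Rightarrow> bool) \<Rightarrow> ('a, 'k::field) pmod \<Rightarrow> ('a, 'k) pmod \<Rightarrow> bool" where
  "pmod_iso X leq M N \<longleftrightarrow> (\<exists>\<phi>.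
       (\<forall>x\<in>X. \<phi> x \<in> carrier_mat (dimM N x) (dimM M x) \<and> invertible_mat (\<phi> x))
     \<and> (\<forall>x\<in>X. \<forall>y\<in>X. leq x y \<longrightarrow> \<phi> y * mapM M x y = mapM N x y * \<phi> x))"

definition galois_insertion ::
  "'b set \<Rightarrow> ('b \<Rightarrow> 'b \<Rightarrow> bool) \<Rightarrow> 'a set \<Rightarrow> ('a \<Rightarrow> 'a \<Rightarrow> bool)
   \<Rightarrow> ('b \<Rightarrow> 'a) \<Rightarrow> ('a \<Rightarrow> 'b) \<Rightarrow> bool" where
  "galois_insertion Q leQ P leP f g \<longleftrightarrow>
       (\<forall>u\<in>Q. f u \<in> P) \<and> (\<forall>x\<in>P. g x \<in> Q)
     \<and> (\<forall>u\<in>Q. \<forall>v\<in>Q. leQ u v \<longrightarrow> leP (f u) (f v))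
     \<and> (\<forall>x\<in>P. \<forall>y\<in>P. leP x y \<longrightarrow> leQ (g x) (g y))
     \<and> (\<forall>u\<in>Q. \<forall>x\<in>P. leP (f u) x \<longleftrightarrow> leQ u (g x))
     \<and> (\<forall>x\<in>P. f (g x) = x)"

text \<open>Galois couplings. The finite poset Q is taken with carrier a subset of nat;
  every finite poset is isomorphic to such a one.\<close>
definition galois_coupling ::
  "'a set \<Rightarrow> ('a \<Rightarrow> 'a \<Rightarrow> bool) \<Rightarrow> ('a, 'k::field) pmod \<Rightarrow> ('a, 'k) pmod
   \<Rightarrow> nat set \<Rightarrow> (nat \<Rightarrow> nat \<Rightarrow> bool) \<Rightarrow> (nat \<Rightarrow> 'a) \<Rightarrow> ('a \<Rightarrow> nat)
   \<Rightarrow> (nat \<Rightarrow> 'a) \<Rightarrow> ('a \<Rightarrow> nat) \<Rightarrow> (nat, 'k) pmod \<Rightarrow> bool" where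
  "galois_coupling P leq M N Q leQ f g h i \<Gamma> \<longleftrightarrow>
       finite_poset Q leQ
     \<and> galois_insertion Q leQ P leq f g
     \<and> galois_insertion Q leQ P leq h i
     \<and> is_pmod Q leQ \<Gamma>
     \<and> pmod_iso P leq (pullback g \<Gamma>) M
     \<and> pmod_iso P leq (pullback i \<Gamma>) N"

text \<open>Cost sup over Q of d(f q, h q); the sup of the empty family is 0 (distances are
  nonnegative).\<close>
definition coupling_cost :: "('a \<Rightarrow> 'a \<Rightarrow> real) \<Rightarrow> nat set \<Rightarrow> (nat \<Rightarrow> 'a) \<Rightarrow> (nat \<Rightarrow> 'a) \<Rightarrow> ereal" where
  "coupling_cost d Q f h = Sup (insert 0 ((\<lambda>q. ereal (d (f q) (h q))) ` Q))"

definition dGT :: "'a set \<Rightarrow> ('a \<Rightarrow> 'a \<Rightarrow> bool) \<Rightarrow> ('a \<Rightarrow> 'a \<Rightarrow> real)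
   \<Rightarrow> ('a, 'k::field) pmod \<Rightarrow> ('a, 'k) pmod \<Rightarrow> ereal" where
  "dGT P leq d M N = Inf {coupling_cost d Q f h | Q leQ f g h i \<Gamma>.
                           galois_coupling P leq M N Q leQ f g h i \<Gamma>}"

text \<open>A resolution \<open>E\<^sub>\<bullet>\<close>: \<open>gens E i\<close> is the list smd(E_i) of indices (E_i = \<Oplus> k[P]_x),
  \<open>bd E i\<close> is Mat(\<partial>_i) (rows indexed by smd(E_{i+1}), columns by smd(E_i)),
  and \<open>aug E j \<in> M(gens E 0 ! j)\<close> determines the augmentation E_0 \<rightarrow> M on the j-th summand.\<close>
record ('a, 'k) fres =
  gens :: "nat \<Rightarrow> 'a list"
  bd   :: "nat \<Rightarrow> 'k mat"
  aug  :: "nat \<Rightarrow> 'k vec"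

text \<open>Elements of E_i(z) = \<Oplus>_{j} k[P]_{L!j}(z): coordinate vectors supported on
  those j with L!j \<le> z.\<close>
definition freev :: "('a \<Rightarrow> 'a \<Rightarrow> bool) \<Rightarrow> 'a list \<Rightarrow> 'a \<Rightarrow> 'k::field vec set" where
  "freev leq L z = {v \<in> carrier_vec (length L). \<forall>j < length L. \<not> leq (L ! j) z \<longrightarrow> v $ j = 0}"

text \<open>The component of \<partial>_i at a point: the basis vector of summand x' goes to
  \<Sum>_x a_{x',x} e_x.\<close>
definition bdmap :: "('a, 'k::field) fres \<Rightarrow> nat \<Rightarrow> 'k vec \<Rightarrow> 'k vec" where
  "bdmap E i v = transpose_mat (bd E i) *\<^sub>v v"

definition augmat :: "('a \<Rightarrow> 'a \<Rightarrow> bool) \<Rightarrow> ('a, 'k::field) pmod \<Rightarrow> ('a, 'k) fres \<Rightarrow> 'a \<Rightarrow> 'k mat" where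
  "augmat leq M E z = mat (dimM M z) (length (gens E 0))
     (\<lambda>(r, j). if leq (gens E 0 ! j) z then (mapM M (gens E 0 ! j) z *\<^sub>v aug E j) $ r else 0)"

definition is_resolution :: "'a set \<Rightarrow> ('a \<Rightarrow> 'a \<Rightarrow> bool) \<Rightarrow> ('a, 'k::field) pmod
   \<Rightarrow> ('a, 'k) fres \<Rightarrow> bool" where
  "is_resolution X leq M E \<longleftrightarrow>
       (\<forall>i. set (gens E i) \<subseteq> X)
     \<and> (\<forall>i. bd E i \<in> carrier_mat (length (gens E (Suc i))) (length (gens E i)))
     \<and> (\<forall>i j' j. j' < length (gens E (Suc i)) \<longrightarrow> j < length (gens E i)
            \<longrightarrow> \<not> leq (gens E i ! j) (gens E (Suc i) ! j') \<longrightarrow> bd E i $$ (j', j) = 0)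
     \<and> (\<forall>j < length (gens E 0). aug E j \<in> carrier_vec (dimM M (gens E 0 ! j)))
     \<and> (\<forall>z\<in>X.
          (\<forall>w \<in> carrier_vec (dimM M z). \<exists>v \<in> freev leq (gens E 0) z. augmat leq M E z *\<^sub>v v = w)
        \<and> (\<forall>v \<in> freev leq (gens E 0) z.
              augmat leq M E z *\<^sub>v v = 0\<^sub>v (dimM M z)
              \<longleftrightarrow> (\<exists>u \<in> freev leq (gens E 1) z. bdmap E 0 u = v))
        \<and> (\<forall>i. \<forall>v \<in> freev leq (gens E (Suc i)) z.
              bdmap E i v = 0\<^sub>v (length (gens E i))
              \<longleftrightarrow> (\<exists>u \<in> freev leq (gens E (Suc (Suc i))) z. bdmap E (Suc i) u = v)))"

definition is_matching :: "('a, 'k) fres \<Rightarrow> ('a, 'k) fres \<Rightarrow> (nat \<Rightarrow> nat \<Rightarrow> nat) \<Rightarrow> bool" where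
  "is_matching E F B \<longleftrightarrow>
       (\<forall>i. bij_betw (B i) {..<length (gens E i)} {..<length (gens F i)})
     \<and> (\<forall>i j' j. j' < length (gens E (Suc i)) \<longrightarrow> j < length (gens E i)
            \<longrightarrow> bd E i $$ (j', j) = bd F i $$ (B (Suc i) j', B i j))"

definition matching_cost :: "('a \<Rightarrow> 'a \<Rightarrow> real) \<Rightarrow> ('a, 'k) fres \<Rightarrow> ('a, 'k) fres
   \<Rightarrow> (nat \<Rightarrow> nat \<Rightarrow> nat) \<Rightarrow> ereal" where
  "matching_cost d E F B = Sup (insert 0
      {ereal (d (gens E i ! j) (gens F i ! B i j)) | i j. j < length (gens E i)})"

definition distR :: "('a \<Rightarrow> 'a \<Rightarrow> real) \<Rightarrow> ('a, 'k) fres \<Rightarrow> ('a, 'k) fres \<Rightarrow> ereal" where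
  "distR d E F = Inf {matching_cost d E F B | B. is_matching E F B}"

text \<open>Res(P^M,P^N): pairs of resolutions of M and N with equally many summands in each degree.\<close>
definition distB :: "'a set \<Rightarrow> ('a \<Rightarrow> 'a \<Rightarrow> bool) \<Rightarrow> ('a \<Rightarrow> 'a \<Rightarrow> real)
   \<Rightarrow> ('a, 'k::field) pmod \<Rightarrow> ('a, 'k) pmod \<Rightarrow> ereal" where
  "distB P leq d M N = Inf {distR d E F | E F.
       is_resolution P leq M E \<and> is_resolution P leq N F
     \<and> (\<forall>i. length (gens E i) = length (gens F i))}"

end

theory Submission
  imports Defs "Jordan_Normal_Form.Matrix_Kernel"
begin
lemma mat_vec_comp:
  assumes C: "C \<in> carrier_mat r n" and v: "v \<in> carrier_vec n" and i: "i < r"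
  shows "(C *\<^sub>v v) $ i = (\<Sum>j<n. C $$ (i,j) * v $ j)"
  using C v i by (auto simp: scalar_prod_def lessThan_atLeast0 intro!: sum.cong)

lemma mat_vec_sum_comp:
  fixes C :: "'k::field mat"
  assumes C: "C \<in> carrier_mat r n" and v: "v \<in> carrier_vec n"
  and w: "\<And>k. k \<in> F \<Longrightarrow> w k \<in> carrier_vec n"
  and vj: "\<And>j. j < n \<Longrightarrow> v $ j = (\<Sum>k\<in>F. c k * w k $ j)"
  and i: "i < r"
  shows "(C *\<^sub>v v) $ i = (\<Sum>k\<in>F. c k * (C *\<^sub>v w k) $ i)"
proof -
  have "(C *\<^sub>v v) $ i = (\<Sum>j<n. C $$ (i,j) * (\<Sum>k\<in>F. c k * w k $ j))"
    using mat_vec_comp[OF C v i] vj by simp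
  also have "\<dots> = (\<Sum>j<n. \<Sum>k\<in>F. c k * (C $$ (i,j) * w k $ j))"
    by (simp add: sum_distrib_left mult_ac)
  also have "\<dots> = (\<Sum>k\<in>F. \<Sum>j<n. c k * (C $$ (i,j) * w k $ j))"
    by (rule sum.swap)
  also have "\<dots> = (\<Sum>k\<in>F. c k * (C *\<^sub>v w k) $ i)"
    using mat_vec_comp[OF C w i] by (simp add: sum_distrib_left)
  finally show ?thesis .
qed

lemma transpose_comp:
  assumes A: "A \<in> carrier_mat m n" and u: "u \<in> carrier_vec m" and j: "j < n"
  shows "(transpose_mat A *\<^sub>v u) $ j = (\<Sum>k<m. A $$ (k,j) * u $ k)"
  using A u j by (auto simp: scalar_prod_def lessThan_atLeast0 intro!: sum.cong)

lemma mat_zero_vec: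
  assumes "A \<in> carrier_mat r n"
  shows "A *\<^sub>v 0\<^sub>v n = (0\<^sub>v r :: 'k::field vec)"
  using assms by (intro eq_vecI) (auto simp: scalar_prod_def)

lemma inv_mat_props:
  fixes A :: "'k::field mat"
  assumes A: "A \<in> carrier_mat n n" and inv: "invertible_mat A"
  obtains B where "B \<in> carrier_mat n n" "A * B = 1\<^sub>m n" "B * A = 1\<^sub>m n"
proof -
  obtain B where AB: "A * B = 1\<^sub>m (dim_row A)" and BA: "B * A = 1\<^sub>m (dim_row B)"
    using inv unfolding invertible_mat_def inverts_mat_def by blast
  have "dim_col B = n" using AB A by (metis index_mult_mat(3) index_one_mat(3) carrier_matD(1))
  moreover have "dim_row B = n" using BA A by (metis index_mult_mat(3) index_one_mat(3) carrier_matD(2))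
  ultimately show ?thesis using that AB BA A by auto
qed

lemma inv_mat_inj:
  fixes A :: "'k::field mat"
  assumes A: "A \<in> carrier_mat n n" and inv: "invertible_mat A" and v: "v \<in> carrier_vec n"
  shows "A *\<^sub>v v = 0\<^sub>v n \<longleftrightarrow> v = 0\<^sub>v n"
proof
  obtain B where B: "B \<in> carrier_mat n n" "A * B = 1\<^sub>m n" "B * A = 1\<^sub>m n"
    using inv_mat_props[OF A inv] by blast
  assume "A *\<^sub>v v = 0\<^sub>v n"
  hence "B *\<^sub>v (A *\<^sub>v v) = 0\<^sub>v n" using B mat_zero_vec by metis
  thus "v = 0\<^sub>v n" using B A v by (simp add: assoc_mult_mat_vec[symmetric])
qed (use A mat_zero_vec in metis)

lemma inv_mat_surj:
  fixes A :: "'k::field mat"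
  assumes A: "A \<in> carrier_mat n n" and inv: "invertible_mat A" and w: "w \<in> carrier_vec n"
  shows "\<exists>v \<in> carrier_vec n. A *\<^sub>v v = w"
proof -
  obtain B where B: "B \<in> carrier_mat n n" "A * B = 1\<^sub>m n" "B * A = 1\<^sub>m n"
    using inv_mat_props[OF A inv] by blast
  have "A *\<^sub>v (B *\<^sub>v w) = w" using B A w by (simp add: assoc_mult_mat_vec[symmetric])
  thus ?thesis using B w by (intro bexI[of _ "B *\<^sub>v w"]) auto
qed

lemma sum_distinct_nth:
  assumes "distinct xs"
  shows "(\<Sum>k<length xs. F (xs ! k)) = (\<Sum>x\<in>set xs. F x)"
  using sum.reindex_bij_betw[OF bij_betw_nth[OF assms refl refl], of F] by simp

lemma ker_span:
  fixes C :: "'k::field mat"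
  assumes C: "C \<in> carrier_mat r n"
  shows "\<exists>bs. (\<forall>b\<in>set bs. b \<in> carrier_vec n \<and> C *\<^sub>v b = 0\<^sub>v r \<and> (\<forall>j<n. \<not> S j \<longrightarrow> b $ j = 0))
     \<and> (\<forall>v\<in>carrier_vec n. C *\<^sub>v v = 0\<^sub>v r \<and> (\<forall>j<n. \<not> S j \<longrightarrow> v $ j = 0)
           \<longrightarrow> (\<exists>c. \<forall>j<n. v $ j = (\<Sum>k<length bs. c k * bs ! k $ j)))"
proof -
  define D :: "'k mat" where "D = mat n n (\<lambda>(i,j). if i = j \<and> S j then 1 else 0)"
  have D: "D \<in> carrier_mat n n" unfolding D_def by simp
  have Dv: "(D *\<^sub>v v) $ i = (if S i then v $ i else 0)" if "v \<in> carrier_vec n" "i < n" for v i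
  proof -
    have "(D *\<^sub>v v) $ i = (\<Sum>j<n. D $$ (i,j) * v $ j)" using mat_vec_comp[OF D that(1) that(2)] .
    also have "\<dots> = (\<Sum>j<n. if j = i then (if S i then v $ i else 0) else 0)"
      using that by (intro sum.cong) (simp_all add: D_def)
    also have "\<dots> = (if S i then v $ i else 0)" using that by simp
    finally show ?thesis .
  qed
  have CD: "C * D \<in> carrier_mat r n" using C D by simp
  obtain B0 where fB0: "finite B0" and bas: "kernel.basis n (C * D) B0"
    using kernel_basis_exists[OF CD] by blast
  interpret K: kernel r n "C * D" by (unfold_locales) (rule CD)
  have B0k: "B0 \<subseteq> mat_kernel (C * D)" and span: "K.span B0 = mat_kernel (C * D)"
    using bas unfolding K.Ker.basis_def by auto
  obtain bs0 where bs0: "set bs0 = B0" "distinct bs0" using finite_distinct_list[OF fB0] by blast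
  define bs where "bs = map (\<lambda>b. D *\<^sub>v b) bs0"
  show ?thesis
  proof (intro exI[of _ bs] conjI ballI impI allI)
    fix b assume "b \<in> set bs"
    then obtain b0 where b0: "b0 \<in> B0" "b = D *\<^sub>v b0" using bs0 unfolding bs_def by auto
    have b0c: "b0 \<in> carrier_vec n" and b0k: "(C * D) *\<^sub>v b0 = 0\<^sub>v r"
      using B0k b0 mat_kernelD[OF CD] by blast+
    show "b \<in> carrier_vec n" using b0 D b0c by simp
    show "C *\<^sub>v b = 0\<^sub>v r" using b0k b0 C D b0c by simp
    show "b $ j = 0" if "j < n" "\<not> S j" for j using Dv[OF b0c] b0 that by auto
  next
    fix v :: "'k vec" assume v: "v \<in> carrier_vec n" and vk: "C *\<^sub>v v = 0\<^sub>v r \<and> (\<forall>j<n. \<not> S j \<longrightarrow> v $ j = 0)"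
    have Dvv: "D *\<^sub>v v = v"
    proof (rule eq_vecI)
      show "dim_vec (D *\<^sub>v v) = dim_vec v" using D v by simp
      fix i assume "i < dim_vec v"
      thus "(D *\<^sub>v v) $ i = v $ i" using Dv[OF v] v vk by simp
    qed
    have "(C * D) *\<^sub>v v = 0\<^sub>v r" using Dvv vk C D v by simp
    hence "v \<in> mat_kernel (C * D)" using v CD by (intro mat_kernelI) auto
    hence "v \<in> K.span B0" using span by simp
    then obtain a U where U: "finite U" "U \<subseteq> B0" and vU: "v = K.lincomb a U"
      unfolding K.Ker.span_def by auto
    have vj: "v $ j = (\<Sum>x\<in>U. a x * x $ j)" if "j < n" for j
      using K.lincomb_index[OF that] U B0k vU by auto
    define a' where "a' x = (if x \<in> U then a x else 0)" for x
    have vj2: "v $ j = (\<Sum>x\<in>B0. a' x * x $ j)" if "j < n" for j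
      unfolding vj[OF that] a'_def
      by (rule sum.mono_neutral_cong_left) (use U fB0 in auto)
    have B0c: "x \<in> carrier_vec n" if "x \<in> B0" for x
      using that B0k mat_kernelD[OF CD] by blast
    show "\<exists>c. \<forall>j<n. v $ j = (\<Sum>k<length bs. c k * bs ! k $ j)"
    proof (intro exI allI impI)
      fix j assume j: "j < n"
      have "v $ j = (D *\<^sub>v v) $ j" using Dvv by simp
      also have "\<dots> = (if S j then v $ j else 0)" using Dv[OF v j] .
      also have "\<dots> = (\<Sum>x\<in>B0. a' x * (D *\<^sub>v x) $ j)"
        using vj2[OF j] Dv[OF _ j] B0c by (auto intro!: sum.cong)
      also have "\<dots> = (\<Sum>k<length bs0. a' (bs0 ! k) * (D *\<^sub>v bs0 ! k) $ j)"
        using sum_distinct_nth[OF bs0(2), of "\<lambda>x. a' x * (D *\<^sub>v x) $ j"] bs0(1) by simp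
      also have "\<dots> = (\<Sum>k<length bs. a' (bs0 ! k) * bs ! k $ j)"
        unfolding bs_def by simp
      finally show "v $ j = (\<Sum>k<length bs. a' (bs0 ! k) * bs ! k $ j)" .
    qed
  qed
qed

definition cover_ok :: "'a set \<Rightarrow> ('a \<Rightarrow> 'a \<Rightarrow> bool) \<Rightarrow> 'a list \<Rightarrow> ('a \<Rightarrow> 'k::field mat)
    \<Rightarrow> ('a \<Rightarrow> nat) \<Rightarrow> 'a list \<Rightarrow> 'k mat \<Rightarrow> bool" where
  "cover_ok X leq L C r L' A \<longleftrightarrow> set L' \<subseteq> X \<and> A \<in> carrier_mat (length L') (length L)
   \<and> (\<forall>j' j. j' < length L' \<longrightarrow> j < length L \<longrightarrow> \<not> leq (L ! j) (L' ! j') \<longrightarrow> A $$ (j', j) = 0)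
   \<and> (\<forall>z\<in>X. \<forall>v\<in>freev leq L z. (C z *\<^sub>v v = 0\<^sub>v (r z)) \<longleftrightarrow> (\<exists>u\<in>freev leq L' z. transpose_mat A *\<^sub>v u = v))"

lemma freev_mono:
  assumes fp: "finite_poset X leq" and L: "set L \<subseteq> X" and z: "z \<in> X" "z' \<in> X" "leq z z'"
  shows "freev leq L z \<subseteq> freev leq L z'"
proof
  fix v assume v: "v \<in> freev leq L z"
  have tr: "leq (L ! j) z'" if "j < length L" "leq (L ! j) z" for j
    using fp that z L unfolding finite_poset_def by (meson nth_mem subsetD)
  show "v \<in> freev leq L z'" using v tr unfolding freev_def by auto
qed

lemma distinct_concat_pairs:
  assumes "distinct xs"
  shows "distinct (concat (map (\<lambda>z. map (Pair z) [0..<g z]) xs))"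
  using assms by (induction xs) (auto simp: distinct_map inj_on_def)

lemma cover_exists:
  fixes C :: "'a \<Rightarrow> 'k::field mat"
  assumes fp: "finite_poset X leq" and L: "set L \<subseteq> X"
    and C: "\<forall>z\<in>X. C z \<in> carrier_mat (r z) (length L)"
    and mono: "\<forall>z\<in>X. \<forall>z'\<in>X. leq z z' \<longrightarrow> (\<forall>v\<in>freev leq L z. C z *\<^sub>v v = 0\<^sub>v (r z) \<longrightarrow> C z' *\<^sub>v v = 0\<^sub>v (r z'))"
  shows "\<exists>L' A. cover_ok X leq L C r L' A"
proof -
  define n where "n = length L"
  have "\<forall>z\<in>X. \<exists>bs. (\<forall>b\<in>set bs. b \<in> carrier_vec n \<and> C z *\<^sub>v b = 0\<^sub>v (r z) \<and> (\<forall>j<n. \<not> leq (L ! j) z \<longrightarrow> b $ j = 0))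
     \<and> (\<forall>v\<in>carrier_vec n. C z *\<^sub>v v = 0\<^sub>v (r z) \<and> (\<forall>j<n. \<not> leq (L ! j) z \<longrightarrow> v $ j = 0)
           \<longrightarrow> (\<exists>c. \<forall>j<n. v $ j = (\<Sum>k<length bs. c k * bs ! k $ j)))"
  proof
    fix z assume z: "z \<in> X"
    show "\<exists>bs. (\<forall>b\<in>set bs. b \<in> carrier_vec n \<and> C z *\<^sub>v b = 0\<^sub>v (r z) \<and> (\<forall>j<n. \<not> leq (L ! j) z \<longrightarrow> b $ j = 0))
     \<and> (\<forall>v\<in>carrier_vec n. C z *\<^sub>v v = 0\<^sub>v (r z) \<and> (\<forall>j<n. \<not> leq (L ! j) z \<longrightarrow> v $ j = 0)
           \<longrightarrow> (\<exists>c. \<forall>j<n. v $ j = (\<Sum>k<length bs. c k * bs ! k $ j)))"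
      by (rule ker_span[of "C z" "r z" n "\<lambda>j. leq (L ! j) z"]) (use C z in \<open>simp add: n_def\<close>)
  qed
  from bchoice[OF this] obtain bs where bsP0: "\<forall>z \<in> X. (\<forall>b\<in>set (bs z). b \<in> carrier_vec n \<and> C z *\<^sub>v b = 0\<^sub>v (r z) \<and> (\<forall>j<n. \<not> leq (L ! j) z \<longrightarrow> b $ j = 0))
     \<and> (\<forall>v\<in>carrier_vec n. C z *\<^sub>v v = 0\<^sub>v (r z) \<and> (\<forall>j<n. \<not> leq (L ! j) z \<longrightarrow> v $ j = 0)
           \<longrightarrow> (\<exists>c. \<forall>j<n. v $ j = (\<Sum>k<length (bs z). c k * bs z ! k $ j)))"
    by blast
  note bsP = bspec[OF bsP0]
  have bs1: "\<And>z b. z \<in> X \<Longrightarrow> b \<in> set (bs z) \<Longrightarrow> b \<in> freev leq L z \<and> C z *\<^sub>v b = 0\<^sub>v (r z)"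
    using bsP unfolding freev_def n_def by blast
  have bs2: "\<And>z v. z \<in> X \<Longrightarrow> v \<in> freev leq L z \<Longrightarrow> C z *\<^sub>v v = 0\<^sub>v (r z)
           \<Longrightarrow> (\<exists>c. \<forall>j<n. v $ j = (\<Sum>k<length (bs z). c k * bs z ! k $ j))"
  proof -
    fix z and v :: "'k vec" assume z: "z \<in> X" and v: "v \<in> freev leq L z" and Cv: "C z *\<^sub>v v = 0\<^sub>v (r z)"
    have "v \<in> carrier_vec n" "\<forall>j<n. \<not> leq (L ! j) z \<longrightarrow> v $ j = 0" using v unfolding freev_def n_def by auto
    thus "\<exists>c. \<forall>j<n. v $ j = (\<Sum>k<length (bs z). c k * bs z ! k $ j)" using bsP[OF z] Cv by blast
  qed
  have fX: "finite X" using fp unfolding finite_poset_def by simp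
  obtain xs where xs: "set xs = X" "distinct xs" using finite_distinct_list[OF fX] by blast
  define ps where "ps = concat (map (\<lambda>z. map (Pair z) [0..<length (bs z)]) xs)"
  have setps: "set ps = {(z,k). z \<in> X \<and> k < length (bs z)}" unfolding ps_def using xs by auto
  have dps: "distinct ps" unfolding ps_def
    by (rule distinct_concat_pairs[OF xs(2), of "\<lambda>z. length (bs z)"])
  define gv where "gv p = bs (fst p) ! snd p" for p
  have gvK: "gv p \<in> freev leq L (fst p) \<and> C (fst p) *\<^sub>v gv p = 0\<^sub>v (r (fst p))" if "p \<in> set ps" for p
    using bs1 that setps unfolding gv_def by auto
  have gvc: "gv p \<in> carrier_vec n" if "p \<in> set ps" for p
    using gvK[OF that] unfolding freev_def n_def by auto
  define L' where "L' = map fst ps"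
  define A where "A = mat (length ps) n (\<lambda>(p,j). gv (ps ! p) $ j)"
  have A: "A \<in> carrier_mat (length L') (length L)" unfolding A_def L'_def n_def by simp
  have tA: "(transpose_mat A *\<^sub>v u) $ j = (\<Sum>p<length ps. u $ p * gv (ps ! p) $ j)"
    if "u \<in> carrier_vec (length ps)" "j < n" for u j
  proof -
    have "(transpose_mat A *\<^sub>v u) $ j = (\<Sum>k<length ps. A $$ (k,j) * u $ k)"
      by (rule transpose_comp[OF _ that]) (simp add: A_def)
    also have "\<dots> = (\<Sum>p<length ps. u $ p * gv (ps ! p) $ j)"
      unfolding A_def using that by (intro sum.cong) auto
    finally show ?thesis .
  qed
  have "cover_ok X leq L C r L' A"
    unfolding cover_ok_def
  proof (intro conjI allI impI ballI)
    show "set L' \<subseteq> X" unfolding L'_def using setps by auto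
    show "A \<in> carrier_mat (length L') (length L)" by (rule A)
  next
    fix j' j assume j': "j' < length L'" and j: "j < length L" and nl: "\<not> leq (L ! j) (L' ! j')"
    have p: "ps ! j' \<in> set ps" using j' unfolding L'_def by simp
    have "gv (ps ! j') $ j = 0" using gvK[OF p] nl j j' unfolding freev_def L'_def by auto
    thus "A $$ (j', j) = 0" using j j' unfolding A_def L'_def n_def by simp
  next
    fix z and v :: "'k vec" assume z: "z \<in> X" and v: "v \<in> freev leq L z"
    have vc: "v \<in> carrier_vec n" using v unfolding freev_def n_def by simp
    show "(C z *\<^sub>v v = 0\<^sub>v (r z)) \<longleftrightarrow> (\<exists>u\<in>freev leq L' z. transpose_mat A *\<^sub>v u = v)"
    proof
      assume Cv: "C z *\<^sub>v v = 0\<^sub>v (r z)"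
      obtain c where c: "\<And>j. j < n \<Longrightarrow> v $ j = (\<Sum>k<length (bs z). c k * bs z ! k $ j)"
        using bs2[OF z v Cv] by blast
      define u where "u = vec (length ps) (\<lambda>p. if fst (ps ! p) = z then c (snd (ps ! p)) else 0)"
      have uc: "u \<in> carrier_vec (length ps)" unfolding u_def by simp
      have refl: "leq z z" using fp z unfolding finite_poset_def by simp
      have uf: "u \<in> freev leq L' z" unfolding freev_def L'_def u_def using refl by auto
      have "transpose_mat A *\<^sub>v u = v"
      proof (rule eq_vecI)
        show "dim_vec (transpose_mat A *\<^sub>v u) = dim_vec v" using A vc unfolding n_def by simp
        fix j assume "j < dim_vec v"
        hence j: "j < n" using vc by simp
        define G where "G q = (if fst q = z then c (snd q) else 0) * gv q $ j" for q
        have "(transpose_mat A *\<^sub>v u) $ j = (\<Sum>p<length ps. u $ p * gv (ps ! p) $ j)"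
          by (rule tA[OF uc j])
        also have "\<dots> = (\<Sum>p<length ps. G (ps ! p))"
          unfolding G_def u_def by (intro sum.cong) auto
        also have "\<dots> = (\<Sum>q\<in>set ps. G q)" by (rule sum_distinct_nth[OF dps])
        also have "\<dots> = (\<Sum>q\<in>Pair z ` {..<length (bs z)}. G q)"
          by (rule sum.mono_neutral_right[OF finite_set]) (use z setps in \<open>auto simp: G_def\<close>)
        also have "\<dots> = (\<Sum>k<length (bs z). G (z, k))"
          by (subst sum.reindex) (auto simp: inj_on_def)
        also have "\<dots> = v $ j" unfolding c[OF j] G_def gv_def by simp
        finally show "(transpose_mat A *\<^sub>v u) $ j = v $ j" .
      qed
      thus "\<exists>u\<in>freev leq L' z. transpose_mat A *\<^sub>v u = v" using uf by blast
    next
      assume "\<exists>u\<in>freev leq L' z. transpose_mat A *\<^sub>v u = v"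
      then obtain u where uf: "u \<in> freev leq L' z" and uv: "transpose_mat A *\<^sub>v u = v" by blast
      have uc: "u \<in> carrier_vec (length ps)" using uf unfolding freev_def L'_def by simp
      have Cz: "C z \<in> carrier_mat (r z) n" using C z unfolding n_def by simp
      show "C z *\<^sub>v v = 0\<^sub>v (r z)"
      proof (rule eq_vecI)
        show "dim_vec (C z *\<^sub>v v) = dim_vec (0\<^sub>v (r z))" using Cz by simp
        fix i assume "i < dim_vec (0\<^sub>v (r z))"
        hence i: "i < r z" by simp
        have "(C z *\<^sub>v v) $ i = (\<Sum>p\<in>{..<length ps}. u $ p * (C z *\<^sub>v gv (ps ! p)) $ i)"
          by (rule mat_vec_sum_comp[OF Cz vc _ _ i]) (use gvc tA[OF uc] uv in auto)
        also have "\<dots> = 0"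
        proof (rule sum.neutral, rule ballI)
          fix p assume "p \<in> {..<length ps}"
          hence p: "p < length ps" by simp
          have pin: "ps ! p \<in> set ps" using p by simp
          show "u $ p * (C z *\<^sub>v gv (ps ! p)) $ i = 0"
          proof (cases "u $ p = 0")
            case False
            hence le: "leq (fst (ps ! p)) z" using uf p unfolding freev_def L'_def by auto
            have fx: "fst (ps ! p) \<in> X" using pin setps by auto
            have "C z *\<^sub>v gv (ps ! p) = 0\<^sub>v (r z)"
              using mono fx z le gvK[OF pin] by blast
            thus ?thesis using i by simp
          qed simp
        qed
        finally show "(C z *\<^sub>v v) $ i = 0\<^sub>v (r z) $ i" using i by simp
      qed
    qed
  qed
  thus ?thesis by blast
qed

lemma cover_okD:
  assumes "cover_ok X leq L C r L' A"
  shows "set L' \<subseteq> X" "A \<in> carrier_mat (length L') (length L)"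
    "\<And>j' j. j' < length L' \<Longrightarrow> j < length L \<Longrightarrow> \<not> leq (L ! j) (L' ! j') \<Longrightarrow> A $$ (j', j) = 0"
    "\<And>z v. z \<in> X \<Longrightarrow> v \<in> freev leq L z \<Longrightarrow> (C z *\<^sub>v v = 0\<^sub>v (r z)) \<longleftrightarrow> (\<exists>u\<in>freev leq L' z. transpose_mat A *\<^sub>v u = v)"
  using assms unfolding cover_ok_def by blast+

primrec res_seq :: "'a set \<Rightarrow> ('a \<Rightarrow> 'a \<Rightarrow> bool) \<Rightarrow> 'a list \<Rightarrow> ('a \<Rightarrow> 'k::field mat) \<Rightarrow> ('a \<Rightarrow> nat)
    \<Rightarrow> nat \<Rightarrow> 'a list \<times> 'k mat" where
  "res_seq X leq L0 C0 r0 0 = (SOME p. cover_ok X leq L0 C0 r0 (fst p) (snd p))"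
| "res_seq X leq L0 C0 r0 (Suc i) = (let p = res_seq X leq L0 C0 r0 i in
     SOME q. cover_ok X leq (fst p) (\<lambda>z. transpose_mat (snd p)) (\<lambda>z. dim_col (snd p)) (fst q) (snd q))"

lemma res_seq_ok:
  fixes C0 :: "'a \<Rightarrow> 'k::field mat"
  assumes fp: "finite_poset X leq" and L: "set L0 \<subseteq> X"
    and C: "\<forall>z\<in>X. C0 z \<in> carrier_mat (r0 z) (length L0)"
    and mono: "\<forall>z\<in>X. \<forall>z'\<in>X. leq z z' \<longrightarrow> (\<forall>v\<in>freev leq L0 z. C0 z *\<^sub>v v = 0\<^sub>v (r0 z) \<longrightarrow> C0 z' *\<^sub>v v = 0\<^sub>v (r0 z'))"
  shows "cover_ok X leq L0 C0 r0 (fst (res_seq X leq L0 C0 r0 0)) (snd (res_seq X leq L0 C0 r0 0))"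
    and "cover_ok X leq (fst (res_seq X leq L0 C0 r0 i)) (\<lambda>z. transpose_mat (snd (res_seq X leq L0 C0 r0 i)))
           (\<lambda>z. dim_col (snd (res_seq X leq L0 C0 r0 i)))
           (fst (res_seq X leq L0 C0 r0 (Suc i))) (snd (res_seq X leq L0 C0 r0 (Suc i)))"
proof -
  let ?R = "res_seq X leq L0 C0 r0"
  show ok0: "cover_ok X leq L0 C0 r0 (fst (?R 0)) (snd (?R 0))"
  proof -
    obtain L' A where "cover_ok X leq L0 C0 r0 L' A" using cover_exists[OF fp L C mono] by blast
    hence "\<exists>p. cover_ok X leq L0 C0 r0 (fst p) (snd p)" by (intro exI[of _ "(L', A)"]) (simp only: fst_conv snd_conv)
    thus ?thesis unfolding res_seq.simps by (rule someI_ex)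
  qed
  have step: "cover_ok X leq (fst (?R i)) (\<lambda>z. transpose_mat (snd (?R i))) (\<lambda>z. dim_col (snd (?R i)))
           (fst (?R (Suc i))) (snd (?R (Suc i)))"
    if Q: "set (fst (?R i)) \<subseteq> X" "snd (?R i) \<in> carrier_mat (length (fst (?R i))) (dim_col (snd (?R i)))" for i
  proof -
    have C': "\<forall>z\<in>X. transpose_mat (snd (?R i)) \<in> carrier_mat (dim_col (snd (?R i))) (length (fst (?R i)))"
      by (intro ballI) (simp only: transpose_carrier_mat Q(2))
    obtain L' A where "cover_ok X leq (fst (?R i)) (\<lambda>z. transpose_mat (snd (?R i))) (\<lambda>z. dim_col (snd (?R i))) L' A"
      using cover_exists[OF fp Q(1) C'] by blast
    hence "\<exists>q. cover_ok X leq (fst (?R i)) (\<lambda>z. transpose_mat (snd (?R i))) (\<lambda>z. dim_col (snd (?R i))) (fst q) (snd q)"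
      by (intro exI[of _ "(L', A)"]) (simp only: fst_conv snd_conv)
    thus ?thesis unfolding res_seq.simps Let_def by (rule someI_ex)
  qed
  have Q: "set (fst (?R i)) \<subseteq> X \<and> snd (?R i) \<in> carrier_mat (length (fst (?R i))) (dim_col (snd (?R i)))" for i
  proof (induction i)
    case 0
    have c: "snd (?R 0) \<in> carrier_mat (length (fst (?R 0))) (length L0)" by (rule cover_okD(2)[OF ok0])
    hence "dim_col (snd (?R 0)) = length L0" by (rule carrier_matD(2))
    then show ?case using cover_okD(1)[OF ok0] c by metis
  next
    case (Suc i)
    have st: "cover_ok X leq (fst (?R i)) (\<lambda>z. transpose_mat (snd (?R i))) (\<lambda>z. dim_col (snd (?R i)))
           (fst (?R (Suc i))) (snd (?R (Suc i)))" using step Suc by blast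
    have c: "snd (?R (Suc i)) \<in> carrier_mat (length (fst (?R (Suc i)))) (length (fst (?R i)))" by (rule cover_okD(2)[OF st])
    hence "dim_col (snd (?R (Suc i))) = length (fst (?R i))" by (rule carrier_matD(2))
    then show ?case using cover_okD(1)[OF st] c by metis
  qed
  show "cover_ok X leq (fst (?R i)) (\<lambda>z. transpose_mat (snd (?R i))) (\<lambda>z. dim_col (snd (?R i)))
           (fst (?R (Suc i))) (snd (?R (Suc i)))"
    by (rule step[OF conjunct1[OF Q] conjunct2[OF Q]])
qed

lemma pmodD:
  assumes "is_pmod X leq M"
  shows "\<And>x y. x \<in> X \<Longrightarrow> y \<in> X \<Longrightarrow> leq x y \<Longrightarrow> mapM M x y \<in> carrier_mat (dimM M y) (dimM M x)"
    "\<And>x. x \<in> X \<Longrightarrow> mapM M x x = 1\<^sub>m (dimM M x)"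
    "\<And>x y z. x \<in> X \<Longrightarrow> y \<in> X \<Longrightarrow> z \<in> X \<Longrightarrow> leq x y \<Longrightarrow> leq y z \<Longrightarrow> mapM M y z * mapM M x y = mapM M x z"
  using assms unfolding is_pmod_def by blast+

lemma fpD:
  assumes "finite_poset X leq"
  shows "finite X" "\<And>x. x \<in> X \<Longrightarrow> leq x x"
    "\<And>x y. x \<in> X \<Longrightarrow> y \<in> X \<Longrightarrow> leq x y \<Longrightarrow> leq y x \<Longrightarrow> x = y"
    "\<And>x y z. x \<in> X \<Longrightarrow> y \<in> X \<Longrightarrow> z \<in> X \<Longrightarrow> leq x y \<Longrightarrow> leq y z \<Longrightarrow> leq x z"
  using assms unfolding finite_poset_def by blast+

lemma augmat_carrier: "augmat leq M E z \<in> carrier_mat (dimM M z) (length (gens E 0))"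
  unfolding augmat_def by simp

lemma augmat_vec:
  assumes v: "v \<in> carrier_vec (length (gens E 0))" and r: "r < dimM M z"
  shows "(augmat leq M E z *\<^sub>v v) $ r = (\<Sum>j<length (gens E 0). v $ j *
     (if leq (gens E 0 ! j) z then (mapM M (gens E 0 ! j) z *\<^sub>v aug E j) $ r else 0))"
  unfolding mat_vec_comp[OF augmat_carrier v r]
  by (intro sum.cong) (use r in \<open>auto simp: augmat_def\<close>)

lemma augmat_nat:
  fixes M :: "('a, 'k::field) pmod"
  assumes fp: "finite_poset X leq" and pm: "is_pmod X leq M" and G: "set (gens E 0) \<subseteq> X"
    and a: "\<forall>j<length (gens E 0). aug E j \<in> carrier_vec (dimM M (gens E 0 ! j))"
    and z: "z \<in> X" "z' \<in> X" "leq z z'" and v: "v \<in> freev leq (gens E 0) z"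
  shows "augmat leq M E z' *\<^sub>v v = mapM M z z' *\<^sub>v (augmat leq M E z *\<^sub>v v)"
proof -
  let ?n = "length (gens E 0)"
  let ?x = "\<lambda>j. gens E 0 ! j"
  define w where "w j = (if leq (?x j) z then mapM M (?x j) z *\<^sub>v aug E j else 0\<^sub>v (dimM M z))" for j
  have vc: "v \<in> carrier_vec ?n" using v unfolding freev_def by simp
  have xX: "?x j \<in> X" if "j < ?n" for j using G that by auto
  have Mzz': "mapM M z z' \<in> carrier_mat (dimM M z') (dimM M z)" using pmodD(1)[OF pm z] .
  have wc: "w j \<in> carrier_vec (dimM M z)" if "j \<in> {..<?n}" for j
  proof (cases "leq (?x j) z")
    case True
    have j: "j < ?n" using that by simp
    show ?thesis unfolding w_def using True
      mult_mat_vec_carrier[OF pmodD(1)[OF pm xX[OF j] z(1) True], of "aug E j"] a j by simp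
  qed (simp add: w_def)
  have av: "augmat leq M E z *\<^sub>v v \<in> carrier_vec (dimM M z)" using augmat_carrier[of leq M E z] vc by simp
  have comp: "(augmat leq M E z *\<^sub>v v) $ s = (\<Sum>j\<in>{..<?n}. v $ j * w j $ s)" if "s < dimM M z" for s
    unfolding augmat_vec[OF vc that] w_def using that by (intro sum.cong) auto
  show ?thesis
  proof (rule eq_vecI)
    show "dim_vec (augmat leq M E z' *\<^sub>v v) = dim_vec (mapM M z z' *\<^sub>v (augmat leq M E z *\<^sub>v v))"
      using Mzz' by (simp add: augmat_def)
    fix r assume "r < dim_vec (mapM M z z' *\<^sub>v (augmat leq M E z *\<^sub>v v))"
    hence r: "r < dimM M z'" using Mzz' by simp
    have "(mapM M z z' *\<^sub>v (augmat leq M E z *\<^sub>v v)) $ r = (\<Sum>j\<in>{..<?n}. v $ j * (mapM M z z' *\<^sub>v w j) $ r)"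
      by (rule mat_vec_sum_comp[OF Mzz' av wc comp r])
    also have "\<dots> = (\<Sum>j<?n. v $ j *
     (if leq (?x j) z' then (mapM M (?x j) z' *\<^sub>v aug E j) $ r else 0))"
    proof (intro sum.cong refl)
      fix j assume "j \<in> {..<?n}"
      hence j: "j < ?n" by simp
      show "v $ j * (mapM M z z' *\<^sub>v w j) $ r = v $ j *
          (if leq (?x j) z' then (mapM M (?x j) z' *\<^sub>v aug E j) $ r else 0)"
      proof (cases "v $ j = 0")
        case False
        hence le: "leq (?x j) z" using v j unfolding freev_def by auto
        have le': "leq (?x j) z'" using fpD(4)[OF fp xX[OF j] z(1) z(2) le z(3)] .
        have Mx: "mapM M (?x j) z \<in> carrier_mat (dimM M z) (dimM M (?x j))" using pmodD(1)[OF pm xX[OF j] z(1) le] .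
        have aj: "aug E j \<in> carrier_vec (dimM M (?x j))" using a j by simp
        have "mapM M z z' *\<^sub>v w j = (mapM M z z' * mapM M (?x j) z) *\<^sub>v aug E j"
          unfolding w_def using le Mzz' Mx aj by simp
        also have "mapM M z z' * mapM M (?x j) z = mapM M (?x j) z'"
          using pmodD(3)[OF pm xX[OF j] z(1) z(2) le z(3)] .
        finally show ?thesis using le' by simp
      qed simp
    qed
    also have "\<dots> = (augmat leq M E z' *\<^sub>v v) $ r" using augmat_vec[OF vc r] by simp
    finally show "(augmat leq M E z' *\<^sub>v v) $ r = (mapM M z z' *\<^sub>v (augmat leq M E z *\<^sub>v v)) $ r" by simp
  qed
qed

theorem resolution_exists:
  fixes M :: "('a, 'k::field) pmod"
  assumes fp: "finite_poset X leq" and pm: "is_pmod X leq M"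
  shows "\<exists>E. is_resolution X leq M E"
proof -
  obtain xs where xs: "set xs = X" "distinct xs" using finite_distinct_list[OF fpD(1)[OF fp]] by blast
  define ps0 where "ps0 = concat (map (\<lambda>z. map (Pair z) [0..<dimM M z]) xs)"
  have setps0: "set ps0 = {(z,k). z \<in> X \<and> k < dimM M z}" unfolding ps0_def using xs by auto
  have dps0: "distinct ps0" unfolding ps0_def
    by (rule distinct_concat_pairs[OF xs(2), of "\<lambda>z. dimM M z"])
  define L0 where "L0 = map fst ps0"
  define a0 :: "nat \<Rightarrow> 'k vec" where "a0 j = unit_vec (dimM M (fst (ps0 ! j))) (snd (ps0 ! j))" for j
  define E0 :: "('a, 'k) fres" where "E0 = \<lparr>gens = \<lambda>i. L0, bd = \<lambda>i. 0\<^sub>m 0 0, aug = a0\<rparr>"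
  define C0 where "C0 z = augmat leq M E0 z" for z
  define R where "R = res_seq X leq L0 C0 (dimM M)"
  define E :: "('a, 'k) fres" where "E = \<lparr>gens = \<lambda>i. case i of 0 \<Rightarrow> L0 | Suc i' \<Rightarrow> fst (R i'),
      bd = \<lambda>i. snd (R i), aug = a0\<rparr>"
  have gE0: "gens E 0 = L0" and gES: "\<And>i. gens E (Suc i) = fst (R i)" and bdE: "\<And>i. bd E i = snd (R i)"
    and augE: "aug E = a0" unfolding E_def by simp_all
  have augmatE: "augmat leq M E z = C0 z" for z unfolding C0_def augmat_def gE0 augE E0_def fres.select_convs by (rule refl)
  have L0X: "set L0 \<subseteq> X" unfolding L0_def using setps0 by auto
  have a0c: "\<forall>j<length L0. a0 j \<in> carrier_vec (dimM M (L0 ! j))" unfolding a0_def L0_def by simp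
  have Cc: "\<forall>z\<in>X. C0 z \<in> carrier_mat (dimM M z) (length L0)"
    unfolding C0_def using augmat_carrier[of leq M E0] by (simp add: E0_def)
  have mono: "\<forall>z\<in>X. \<forall>z'\<in>X. leq z z' \<longrightarrow> (\<forall>v\<in>freev leq L0 z. C0 z *\<^sub>v v = 0\<^sub>v (dimM M z) \<longrightarrow> C0 z' *\<^sub>v v = 0\<^sub>v (dimM M z'))"
  proof (intro ballI impI)
    fix z z' v assume z: "z \<in> X" "z' \<in> X" "leq z z'" and v: "v \<in> freev leq L0 z" and Cv: "C0 z *\<^sub>v v = 0\<^sub>v (dimM M z)"
    have "C0 z' *\<^sub>v v = mapM M z z' *\<^sub>v (C0 z *\<^sub>v v)"
      unfolding C0_def by (rule augmat_nat[OF fp pm _ _ z]) (use L0X a0c v in \<open>simp_all add: E0_def\<close>)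
    also have "\<dots> = 0\<^sub>v (dimM M z')" unfolding Cv by (rule mat_zero_vec[OF pmodD(1)[OF pm z]])
    finally show "C0 z' *\<^sub>v v = 0\<^sub>v (dimM M z')" .
  qed
  have ok0: "cover_ok X leq L0 C0 (dimM M) (fst (R 0)) (snd (R 0))"
    unfolding R_def by (rule res_seq_ok(1)[OF fp L0X Cc mono])
  have okS: "cover_ok X leq (fst (R i)) (\<lambda>z. transpose_mat (snd (R i))) (\<lambda>z. dim_col (snd (R i)))
           (fst (R (Suc i))) (snd (R (Suc i)))" for i
    unfolding R_def by (rule res_seq_ok(2)[OF fp L0X Cc mono])
  have okE: "\<exists>C r. cover_ok X leq (gens E i) C r (gens E (Suc i)) (bd E i)" for i
  proof (cases i)
    case 0 show ?thesis using ok0 unfolding 0 gE0 gES bdE by blast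
  next
    case (Suc k) show ?thesis using okS[of k] unfolding Suc gES bdE by blast
  qed
  have gX: "set (gens E i) \<subseteq> X" for i
  proof (cases i)
    case 0 thus ?thesis using L0X gE0 by simp
  next
    case (Suc k) thus ?thesis using okE[of k] cover_okD(1) by blast
  qed
  have bdc: "bd E i \<in> carrier_mat (length (gens E (Suc i))) (length (gens E i))" for i
    using okE[of i] cover_okD(2) by blast
  have surj: "\<exists>v \<in> freev leq (gens E 0) z. augmat leq M E z *\<^sub>v v = w"
    if z: "z \<in> X" and w: "w \<in> carrier_vec (dimM M z)" for z w
  proof -
    define v where "v = vec (length ps0) (\<lambda>p. if fst (ps0 ! p) = z then w $ snd (ps0 ! p) else 0)"
    have rz: "leq z z" using fpD(2)[OF fp z] .
    have vf: "v \<in> freev leq L0 z" unfolding freev_def L0_def v_def using rz by auto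
    have vc: "v \<in> carrier_vec (length (gens E 0))" unfolding v_def gE0 L0_def by simp
    have "augmat leq M E z *\<^sub>v v = w"
    proof (rule eq_vecI)
      show "dim_vec (augmat leq M E z *\<^sub>v v) = dim_vec w" using w augmat_carrier[of leq M E z] by simp
      fix r assume "r < dim_vec w"
      hence r: "r < dimM M z" using w by simp
      define G where "G q = (if fst q = z then w $ snd q * unit_vec (dimM M z) (snd q) $ r else 0)" for q
      have "(augmat leq M E z *\<^sub>v v) $ r = (\<Sum>j<length (gens E 0). v $ j *
          (if leq (gens E 0 ! j) z then (mapM M (gens E 0 ! j) z *\<^sub>v aug E j) $ r else 0))"
        by (rule augmat_vec[OF vc r])
      also have "\<dots> = (\<Sum>p<length ps0. G (ps0 ! p))"
      proof (rule sum.cong)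
        show "{..<length (gens E 0)} = {..<length ps0}" by (simp add: gE0 L0_def)
      next
        fix p assume "p \<in> {..<length ps0}"
        hence p: "p < length ps0" by simp
        show "v $ p * (if leq (gens E 0 ! p) z then (mapM M (gens E 0 ! p) z *\<^sub>v aug E p) $ r else 0) = G (ps0 ! p)"
        proof (cases "fst (ps0 ! p) = z")
          case True
          have "aug E p \<in> carrier_vec (dimM M z)" unfolding augE a0_def using True by simp
          thus ?thesis using True p rz pmodD(2)[OF pm z] unfolding gE0 L0_def v_def G_def augE a0_def
            by simp
        qed (use p in \<open>simp add: v_def G_def\<close>)
      qed
      also have "\<dots> = (\<Sum>q\<in>set ps0. G q)" by (rule sum_distinct_nth[OF dps0])
      also have "\<dots> = (\<Sum>q\<in>Pair z ` {..<dimM M z}. G q)"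
        by (rule sum.mono_neutral_right[OF finite_set]) (use z setps0 in \<open>auto simp: G_def\<close>)
      also have "\<dots> = (\<Sum>k<dimM M z. G (z, k))"
        by (subst sum.reindex) (auto simp: inj_on_def)
      also have "\<dots> = (\<Sum>k<dimM M z. if k = r then w $ r else 0)"
        using r by (intro sum.cong) (auto simp: G_def)
      also have "\<dots> = w $ r" using r by simp
      finally show "(augmat leq M E z *\<^sub>v v) $ r = w $ r" .
    qed
    thus ?thesis using vf gE0 by blast
  qed
  show ?thesis
  proof (rule exI[of _ E], unfold is_resolution_def, intro conjI allI impI ballI)
    show "set (gens E i) \<subseteq> X" for i by (rule gX)
    show "bd E i \<in> carrier_mat (length (gens E (Suc i))) (length (gens E i))" for i by (rule bdc)
    show "bd E i $$ (j', j) = 0" if "j' < length (gens E (Suc i))" "j < length (gens E i)"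
      "\<not> leq (gens E i ! j) (gens E (Suc i) ! j')" for i j' j
      using okE[of i] cover_okD(3) that by blast
    show "aug E j \<in> carrier_vec (dimM M (gens E 0 ! j))" if "j < length (gens E 0)" for j
      using a0c that unfolding gE0 augE by blast
  next
    fix z and w :: "'k vec" assume "z \<in> X" "w \<in> carrier_vec (dimM M z)"
    thus "\<exists>v\<in>freev leq (gens E 0) z. augmat leq M E z *\<^sub>v v = w" by (rule surj)
  next
    fix z and v :: "'k vec" assume z: "z \<in> X" and v: "v \<in> freev leq (gens E 0) z"
    show "augmat leq M E z *\<^sub>v v = 0\<^sub>v (dimM M z) \<longleftrightarrow> (\<exists>u\<in>freev leq (gens E 1) z. bdmap E 0 u = v)"
      using cover_okD(4)[OF ok0 z] v unfolding augmatE gE0 bdmap_def One_nat_def gES bdE by blast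
  next
    fix z i and v :: "'k vec" assume z: "z \<in> X" and v: "v \<in> freev leq (gens E (Suc i)) z"
    have dc: "dim_col (snd (R i)) = length (gens E i)" using bdc[of i] unfolding bdE by simp
    show "bdmap E i v = 0\<^sub>v (length (gens E i)) \<longleftrightarrow> (\<exists>u\<in>freev leq (gens E (Suc (Suc i))) z. bdmap E (Suc i) u = v)"
      using cover_okD(4)[OF okS[of i] z] v dc unfolding bdmap_def gES bdE by simp
  qed
qed

lemma giD:
  assumes "galois_insertion Q leQ P leq f g"
  shows "\<And>u. u \<in> Q \<Longrightarrow> f u \<in> P" "\<And>x. x \<in> P \<Longrightarrow> g x \<in> Q"
    "\<And>u v. u \<in> Q \<Longrightarrow> v \<in> Q \<Longrightarrow> leQ u v \<Longrightarrow> leq (f u) (f v)"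
    "\<And>x y. x \<in> P \<Longrightarrow> y \<in> P \<Longrightarrow> leq x y \<Longrightarrow> leQ (g x) (g y)"
    "\<And>u x. u \<in> Q \<Longrightarrow> x \<in> P \<Longrightarrow> leq (f u) x \<longleftrightarrow> leQ u (g x)"
    "\<And>x. x \<in> P \<Longrightarrow> f (g x) = x"
  using assms unfolding galois_insertion_def by blast+

lemma freev_map:
  assumes gi: "galois_insertion Q leQ P leq f g" and L: "set L \<subseteq> Q" and z: "z \<in> P"
  shows "freev leq (map f L) z = freev leQ L (g z)"
proof -
  have "leq (f (L ! j)) z \<longleftrightarrow> leQ (L ! j) (g z)" if "j < length L" for j
  proof -
    have "L ! j \<in> Q" using L that by (meson nth_mem subsetD)
    thus ?thesis using giD(5)[OF gi _ z, of "L ! j"] by blast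
  qed
  thus ?thesis unfolding freev_def by auto
qed

lemma pull_resolution:
  fixes Gam :: "('q, 'k::field) pmod" and M :: "('p, 'k) pmod"
  assumes fP: "finite_poset P leq" and gi: "galois_insertion Q leQ P leq f g"
    and pmG: "is_pmod Q leQ Gam" and pmM: "is_pmod P leq M"
    and iso: "pmod_iso P leq (pullback g Gam) M"
    and E: "is_resolution Q leQ Gam E"
  shows "\<exists>E'. is_resolution P leq M E' \<and> (\<forall>i. gens E' i = map f (gens E i)) \<and> (\<forall>i. bd E' i = bd E i)"
proof -
  obtain phi where phic: "\<And>x. x \<in> P \<Longrightarrow> phi x \<in> carrier_mat (dimM M x) (dimM Gam (g x))"
    and phiinv: "\<And>x. x \<in> P \<Longrightarrow> invertible_mat (phi x)"
    and phinat: "\<And>x y. x \<in> P \<Longrightarrow> y \<in> P \<Longrightarrow> leq x y \<Longrightarrow> phi y * mapM Gam (g x) (g y) = mapM M x y * phi x"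
    using iso unfolding pmod_iso_def pullback_def by auto
  have sq: "dimM M x = dimM Gam (g x)" if "x \<in> P" for x
    using phic[OF that] phiinv[OF that] unfolding invertible_mat_def square_mat.simps by auto
  have phic': "phi x \<in> carrier_mat (dimM M x) (dimM M x)" if "x \<in> P" for x
    using phic[OF that] sq[OF that] by simp
  have Eg: "set (gens E i) \<subseteq> Q" for i using E unfolding is_resolution_def by blast
  have Ebd: "bd E i \<in> carrier_mat (length (gens E (Suc i))) (length (gens E i))" for i
    using E unfolding is_resolution_def by blast
  have Ez: "\<And>i j' j. j' < length (gens E (Suc i)) \<Longrightarrow> j < length (gens E i)
            \<Longrightarrow> \<not> leQ (gens E i ! j) (gens E (Suc i) ! j') \<Longrightarrow> bd E i $$ (j', j) = 0"
    using E unfolding is_resolution_def by blast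
  have Ea: "\<And>j. j < length (gens E 0) \<Longrightarrow> aug E j \<in> carrier_vec (dimM Gam (gens E 0 ! j))"
    using E unfolding is_resolution_def by blast
  have Esurj: "\<And>z w. z \<in> Q \<Longrightarrow> w \<in> carrier_vec (dimM Gam z) \<Longrightarrow> \<exists>v \<in> freev leQ (gens E 0) z. augmat leQ Gam E z *\<^sub>v v = w"
    using E unfolding is_resolution_def by blast
  have Ex0: "\<And>z v. z \<in> Q \<Longrightarrow> v \<in> freev leQ (gens E 0) z \<Longrightarrow>
              augmat leQ Gam E z *\<^sub>v v = 0\<^sub>v (dimM Gam z)
              \<longleftrightarrow> (\<exists>u \<in> freev leQ (gens E 1) z. bdmap E 0 u = v)"
    using E unfolding is_resolution_def by blast
  have ExS: "\<And>z i v. z \<in> Q \<Longrightarrow> v \<in> freev leQ (gens E (Suc i)) z \<Longrightarrow>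
              bdmap E i v = 0\<^sub>v (length (gens E i))
              \<longleftrightarrow> (\<exists>u \<in> freev leQ (gens E (Suc (Suc i))) z. bdmap E (Suc i) u = v)"
    using E unfolding is_resolution_def by blast
  let ?u = "\<lambda>j. gens E 0 ! j"
  define a' where "a' j = phi (f (?u j)) *\<^sub>v (mapM Gam (?u j) (g (f (?u j))) *\<^sub>v aug E j)" for j
  define E' :: "('p, 'k) fres" where "E' = \<lparr>gens = \<lambda>i. map f (gens E i), bd = bd E, aug = a'\<rparr>"
  have gE': "gens E' i = map f (gens E i)" and bdE': "bd E' = bd E" and augE': "aug E' = a'" for i
    unfolding E'_def by simp_all
  have bdmapE': "bdmap E' = bdmap E" unfolding bdmap_def[abs_def] bdE' by simp
  have uQ: "?u j \<in> Q" if "j < length (gens E 0)" for j using Eg[of 0] that by auto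
  have fuP: "f (?u j) \<in> P" if "j < length (gens E 0)" for j using giD(1)[OF gi uQ[OF that]] .
  have le_ugfu: "leQ (?u j) (g (f (?u j)))" if "j < length (gens E 0)" for j
    using giD(5)[OF gi uQ[OF that] fuP[OF that]] fpD(2)[OF fP fuP[OF that]] by simp
  have gfuQ: "g (f (?u j)) \<in> Q" if "j < length (gens E 0)" for j using giD(2)[OF gi fuP[OF that]] .
  have a'c: "a' j \<in> carrier_vec (dimM M (f (?u j)))" if j: "j < length (gens E 0)" for j
  proof -
    have "mapM Gam (?u j) (g (f (?u j))) *\<^sub>v aug E j \<in> carrier_vec (dimM Gam (g (f (?u j))))"
      using mult_mat_vec_carrier[OF pmodD(1)[OF pmG uQ[OF j] gfuQ[OF j] le_ugfu[OF j]] Ea[OF j]] .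
    thus ?thesis unfolding a'_def using phic[OF fuP[OF j]] by simp
  qed
  have augvec: "augmat leq M E' z *\<^sub>v v = phi z *\<^sub>v (augmat leQ Gam E (g z) *\<^sub>v v)"
    if z: "z \<in> P" and v: "v \<in> carrier_vec (length (gens E 0))" for z v
  proof -
    let ?n = "length (gens E 0)"
    have gz: "g z \<in> Q" using giD(2)[OF gi z] .
    define w where "w j = (if leQ (?u j) (g z) then mapM Gam (?u j) (g z) *\<^sub>v aug E j else 0\<^sub>v (dimM Gam (g z)))" for j
    have wc: "w j \<in> carrier_vec (dimM Gam (g z))" if "j \<in> {..<?n}" for j
    proof (cases "leQ (?u j) (g z)")
      case True
      have j: "j < ?n" using that by simp
      show ?thesis unfolding w_def using True
        mult_mat_vec_carrier[OF pmodD(1)[OF pmG uQ[OF j] gz True] Ea[OF j]] by simp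
    qed (simp add: w_def)
    have av: "augmat leQ Gam E (g z) *\<^sub>v v \<in> carrier_vec (dimM Gam (g z))"
      using augmat_carrier[of leQ Gam E "g z"] v by simp
    have comp: "(augmat leQ Gam E (g z) *\<^sub>v v) $ s = (\<Sum>j\<in>{..<?n}. v $ j * w j $ s)" if "s < dimM Gam (g z)" for s
      unfolding augmat_vec[OF v that] w_def using that by (intro sum.cong) auto
    have v': "v \<in> carrier_vec (length (gens E' 0))" using v unfolding gE' by simp
    show ?thesis
    proof (rule eq_vecI)
      show "dim_vec (augmat leq M E' z *\<^sub>v v) = dim_vec (phi z *\<^sub>v (augmat leQ Gam E (g z) *\<^sub>v v))"
        using phic[OF z] by (simp add: augmat_def)
      fix r assume "r < dim_vec (phi z *\<^sub>v (augmat leQ Gam E (g z) *\<^sub>v v))"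
      hence r: "r < dimM M z" using phic[OF z] by simp
      have "(phi z *\<^sub>v (augmat leQ Gam E (g z) *\<^sub>v v)) $ r = (\<Sum>j\<in>{..<?n}. v $ j * (phi z *\<^sub>v w j) $ r)"
        by (rule mat_vec_sum_comp[OF phic[OF z] av wc comp r])
      also have "\<dots> = (\<Sum>j<length (gens E' 0). v $ j *
         (if leq (gens E' 0 ! j) z then (mapM M (gens E' 0 ! j) z *\<^sub>v aug E' j) $ r else 0))"
      proof (rule sum.cong)
        show "{..<?n} = {..<length (gens E' 0)}" unfolding gE' by simp
      next
        fix j assume "j \<in> {..<length (gens E' 0)}"
        hence j: "j < ?n" unfolding gE' by simp
        have g'j: "gens E' 0 ! j = f (?u j)" unfolding gE' using j by simp
        have iff: "leq (f (?u j)) z \<longleftrightarrow> leQ (?u j) (g z)" using giD(5)[OF gi uQ[OF j] z] .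
        show "v $ j * (phi z *\<^sub>v w j) $ r = v $ j *
         (if leq (gens E' 0 ! j) z then (mapM M (gens E' 0 ! j) z *\<^sub>v aug E' j) $ r else 0)"
        proof (cases "leq (f (?u j)) z")
          case True
          hence le: "leQ (?u j) (g z)" using iff by simp
          have le2: "leQ (g (f (?u j))) (g z)" using giD(4)[OF gi fuP[OF j] z True] .
          have MG1: "mapM Gam (?u j) (g (f (?u j))) \<in> carrier_mat (dimM Gam (g (f (?u j)))) (dimM Gam (?u j))"
            using pmodD(1)[OF pmG uQ[OF j] gfuQ[OF j] le_ugfu[OF j]] .
          have MG2: "mapM Gam (g (f (?u j))) (g z) \<in> carrier_mat (dimM Gam (g z)) (dimM Gam (g (f (?u j))))"
            using pmodD(1)[OF pmG gfuQ[OF j] gz le2] .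
          have MM: "mapM M (f (?u j)) z \<in> carrier_mat (dimM M z) (dimM M (f (?u j)))"
            using pmodD(1)[OF pmM fuP[OF j] z True] .
          have aj: "aug E j \<in> carrier_vec (dimM Gam (?u j))" using Ea[OF j] .
          have ph: "phi (f (?u j)) \<in> carrier_mat (dimM M (f (?u j))) (dimM Gam (g (f (?u j))))"
            using phic[OF fuP[OF j]] .
          have "mapM M (f (?u j)) z *\<^sub>v a' j = (mapM M (f (?u j)) z * phi (f (?u j))) *\<^sub>v (mapM Gam (?u j) (g (f (?u j))) *\<^sub>v aug E j)"
            unfolding a'_def using MM ph MG1 aj by simp
          also have "mapM M (f (?u j)) z * phi (f (?u j)) = phi z * mapM Gam (g (f (?u j))) (g z)"
            using phinat[OF fuP[OF j] z True] by simp
          also have "(phi z * mapM Gam (g (f (?u j))) (g z)) *\<^sub>v (mapM Gam (?u j) (g (f (?u j))) *\<^sub>v aug E j)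
              = phi z *\<^sub>v ((mapM Gam (g (f (?u j))) (g z) * mapM Gam (?u j) (g (f (?u j)))) *\<^sub>v aug E j)"
            using phic[OF z] MG1 MG2 aj by simp
          also have "mapM Gam (g (f (?u j))) (g z) * mapM Gam (?u j) (g (f (?u j))) = mapM Gam (?u j) (g z)"
            using pmodD(3)[OF pmG uQ[OF j] gfuQ[OF j] gz le_ugfu[OF j] le2] .
          finally have "mapM M (f (?u j)) z *\<^sub>v a' j = phi z *\<^sub>v w j" unfolding w_def using le by simp
          thus ?thesis unfolding g'j augE' using True by simp
        next
          case False
          hence "w j = 0\<^sub>v (dimM Gam (g z))" using iff unfolding w_def by simp
          hence "phi z *\<^sub>v w j = 0\<^sub>v (dimM M z)" using mat_zero_vec[OF phic[OF z]] by simp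
          thus ?thesis unfolding g'j using False r by simp
        qed
      qed
      also have "\<dots> = (augmat leq M E' z *\<^sub>v v) $ r" using augmat_vec[OF v' r] by simp
      finally show "(augmat leq M E' z *\<^sub>v v) $ r = (phi z *\<^sub>v (augmat leQ Gam E (g z) *\<^sub>v v)) $ r" by simp
    qed
  qed
  have fv: "freev leq (gens E' i) z = freev leQ (gens E i) (g z)" if "z \<in> P" for i z
    unfolding gE' by (rule freev_map[OF gi Eg that])
  have "is_resolution P leq M E'"
    unfolding is_resolution_def
  proof (intro conjI allI impI ballI)
    show "set (gens E' i) \<subseteq> P" for i unfolding gE' using Eg[of i] giD(1)[OF gi] by auto
    show "bd E' i \<in> carrier_mat (length (gens E' (Suc i))) (length (gens E' i))" for i
      unfolding gE' bdE' using Ebd[of i] by simp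
    show "bd E' i $$ (j', j) = 0" if "j' < length (gens E' (Suc i))" "j < length (gens E' i)"
      "\<not> leq (gens E' i ! j) (gens E' (Suc i) ! j')" for i j' j
    proof -
      have j': "j' < length (gens E (Suc i))" and j: "j < length (gens E i)" using that unfolding gE' by simp_all
      have q1: "gens E i ! j \<in> Q" using Eg[of i] j by (meson nth_mem subsetD)
      have q2: "gens E (Suc i) ! j' \<in> Q" using Eg[of "Suc i"] j' by (meson nth_mem subsetD)
      have "\<not> leQ (gens E i ! j) (gens E (Suc i) ! j')"
        using that(3) giD(3)[OF gi q1 q2] j j' unfolding gE' by auto
      thus ?thesis unfolding bdE' using Ez[OF j' j] by simp
    qed
    show "aug E' j \<in> carrier_vec (dimM M (gens E' 0 ! j))" if "j < length (gens E' 0)" for j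
      using a'c[of j] that unfolding augE' gE' by simp
  next
    fix z and w :: "'k vec" assume z: "z \<in> P" and w: "w \<in> carrier_vec (dimM M z)"
    have gz: "g z \<in> Q" using giD(2)[OF gi z] .
    obtain w' where w': "w' \<in> carrier_vec (dimM M z)" "phi z *\<^sub>v w' = w"
      using inv_mat_surj[OF phic'[OF z] phiinv[OF z] w] by blast
    obtain v where v: "v \<in> freev leQ (gens E 0) (g z)" "augmat leQ Gam E (g z) *\<^sub>v v = w'"
      using Esurj[OF gz] w'(1) sq[OF z] by auto
    have vc: "v \<in> carrier_vec (length (gens E 0))" using v(1) unfolding freev_def by simp
    show "\<exists>v\<in>freev leq (gens E' 0) z. augmat leq M E' z *\<^sub>v v = w"
      using v augvec[OF z vc] w'(2) fv[OF z, of 0] by auto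
  next
    fix z and v :: "'k vec" assume z: "z \<in> P" and v: "v \<in> freev leq (gens E' 0) z"
    have gz: "g z \<in> Q" using giD(2)[OF gi z] .
    have v0: "v \<in> freev leQ (gens E 0) (g z)" using v unfolding fv[OF z] .
    have vc: "v \<in> carrier_vec (length (gens E 0))" using v0 unfolding freev_def by simp
    have ac: "augmat leQ Gam E (g z) *\<^sub>v v \<in> carrier_vec (dimM M z)"
      using augmat_carrier[of leQ Gam E "g z"] vc sq[OF z] by simp
    have "augmat leq M E' z *\<^sub>v v = 0\<^sub>v (dimM M z) \<longleftrightarrow> phi z *\<^sub>v (augmat leQ Gam E (g z) *\<^sub>v v) = 0\<^sub>v (dimM M z)"
      by (simp only: augvec[OF z vc])
    also have "\<dots> \<longleftrightarrow> augmat leQ Gam E (g z) *\<^sub>v v = 0\<^sub>v (dimM M z)"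
      by (rule inv_mat_inj[OF phic'[OF z] phiinv[OF z] ac])
    also have "\<dots> \<longleftrightarrow> augmat leQ Gam E (g z) *\<^sub>v v = 0\<^sub>v (dimM Gam (g z))" by (simp only: sq[OF z])
    also have "\<dots> \<longleftrightarrow> (\<exists>u \<in> freev leQ (gens E 1) (g z). bdmap E 0 u = v)" by (rule Ex0[OF gz v0])
    also have "\<dots> \<longleftrightarrow> (\<exists>u \<in> freev leq (gens E' 1) z. bdmap E' 0 u = v)" unfolding fv[OF z] bdmapE' ..
    finally show "augmat leq M E' z *\<^sub>v v = 0\<^sub>v (dimM M z) \<longleftrightarrow> (\<exists>u\<in>freev leq (gens E' 1) z. bdmap E' 0 u = v)" .
  next
    fix z i and v :: "'k vec" assume z: "z \<in> P" and v: "v \<in> freev leq (gens E' (Suc i)) z"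
    have gz: "g z \<in> Q" using giD(2)[OF gi z] .
    have v0: "v \<in> freev leQ (gens E (Suc i)) (g z)" using v unfolding fv[OF z] .
    show "bdmap E' i v = 0\<^sub>v (length (gens E' i)) \<longleftrightarrow> (\<exists>u\<in>freev leq (gens E' (Suc (Suc i))) z. bdmap E' (Suc i) u = v)"
      unfolding bdmapE' fv[OF z] using ExS[OF gz v0] unfolding gE' by simp
  qed
  note r = this
  show ?thesis
  proof (intro exI[of _ E'] conjI allI)
    show "is_resolution P leq M E'" by (rule r)
    show "gens E' i = map f (gens E i)" for i by (rule gE')
    show "bd E' i = bd E i" for i unfolding bdE' ..
  qed
qed

theorem theorem5p2:
  fixes P :: "'p set" and leq :: "'p \<Rightarrow> 'p \<Rightarrow> bool" and d :: "'p \<Rightarrow> 'p \<Rightarrow> real"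
    and M N :: "('p, 'k::field) pmod"
  assumes "finite_poset P leq" and "metric_on P d"
    and "is_pmod P leq M" and "is_pmod P leq N"
  shows "distB P leq d M N \<le> dGT P leq d M N"
proof -
  note fP = assms(1) and pmM = assms(3) and pmN = assms(4)
  have main: "distB P leq d M N \<le> coupling_cost d Q f h"
    if gc: "galois_coupling P leq M N Q leQ f g h i Gam" for Q leQ f g h i Gam
  proof -
    have fQ: "finite_poset Q leQ" and gi1: "galois_insertion Q leQ P leq f g"
      and gi2: "galois_insertion Q leQ P leq h i" and pmG: "is_pmod Q leQ Gam"
      and iso1: "pmod_iso P leq (pullback g Gam) M" and iso2: "pmod_iso P leq (pullback i Gam) N"
      using gc unfolding galois_coupling_def by blast+
    obtain E where E: "is_resolution Q leQ Gam E" using resolution_exists[OF fQ pmG] by blast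
    have EQ: "set (gens E k) \<subseteq> Q" for k using E unfolding is_resolution_def by blast
    obtain E1 where E1: "is_resolution P leq M E1" "\<forall>k. gens E1 k = map f (gens E k)" "\<forall>k. bd E1 k = bd E k"
      using pull_resolution[OF fP gi1 pmG pmM iso1 E] by blast
    obtain E2 where E2: "is_resolution P leq N E2" "\<forall>k. gens E2 k = map h (gens E k)" "\<forall>k. bd E2 k = bd E k"
      using pull_resolution[OF fP gi2 pmG pmN iso2 E] by blast
    have len: "\<forall>k. length (gens E1 k) = length (gens E2 k)" using E1(2) E2(2) by simp
    have "distB P leq d M N \<le> distR d E1 E2"
      unfolding distB_def by (rule Inf_lower) (use E1(1) E2(1) len in blast)
    also have "distR d E1 E2 \<le> matching_cost d E1 E2 (\<lambda>k j. j)"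
    proof -
      have "is_matching E1 E2 (\<lambda>k j. j)"
        unfolding is_matching_def
      proof (intro conjI allI impI)
        show "bij_betw (\<lambda>j. j) {..<length (gens E1 k)} {..<length (gens E2 k)}" for k
          using len by (simp add: bij_betw_def)
        show "bd E1 k $$ (j', j) = bd E2 k $$ (j', j)" for k j' j using E1(3) E2(3) by simp
      qed
      thus ?thesis unfolding distR_def by (intro Inf_lower) blast
    qed
    also have "matching_cost d E1 E2 (\<lambda>k j. j) \<le> coupling_cost d Q f h"
      unfolding matching_cost_def coupling_cost_def
    proof (rule Sup_subset_mono, rule insert_mono, rule subsetI)
      fix x assume "x \<in> {ereal (d (gens E1 k ! j) (gens E2 k ! j)) | k j. j < length (gens E1 k)}"
      then obtain k j where x: "x = ereal (d (gens E1 k ! j) (gens E2 k ! j))" and j: "j < length (gens E1 k)" by blast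
      have j': "j < length (gens E k)" using j E1(2) by simp
      have u: "gens E k ! j \<in> Q" using EQ[of k] j' by (meson nth_mem subsetD)
      have "x = ereal (d (f (gens E k ! j)) (h (gens E k ! j)))" using x j' E1(2) E2(2) by simp
      thus "x \<in> (\<lambda>q. ereal (d (f q) (h q))) ` Q" using u by blast
    qed
    finally show ?thesis .
  qed
  show ?thesis unfolding dGT_def by (rule Inf_greatest) (use main in blast)
qed

end
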